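(* Let $\mathbb{X},\mathbb{Y}$ be finite-dimensional real inner product spaces, $S\subseteq\mathbb{Y}$ a closed set and $\Upsilon:\mathbb{X}\to\mathbb{Y}$ a twice differentiable mapping. Let $\overline{x}\in\Upsilon^{-1}(S)$ and $d\in\mathbb{X}$. Suppose that the multifunction $\mathcal{F}(z):=\Upsilon(z)-S$ is metrically subregular at $\overline{x}$ for the origin in direction $d$, and that $S$ is outer second-order regular (respectively, second-order regular) at $\Upsilon(\overline{x})$ in the direction $\Upsilon'(\overline{x})d\in\mathcal{T}_S(\Upsilon(\overline{x}))$. Then $\Upsilon^{-1}(S)$ is outer second-order regular (respectively, second-order regular) at $\overline{x}$ in the direction $d$.
   Context: For a closed set $C$ in a finite-dimensional space, $x\in C$ and a direction $d$: the (Bouligand) tangent cone is $\mathcal{T}_C(x)=\{d\mid \exists t_k\downarrow0,\ d^k\to d \text{ with } x+t_kd^k\in C\}$; the outer second-order tangent set is $\mathcal{T}^2_C(x;d)=\{w\mid \exists t_k\downarrow 0 \text{ with } \mathrm{dist}(x+t_kd+\tfrac12t_k^2w,C)=o(t_k^2)\}$; the inner second-order tangent set is $\mathcal{T}^{i,2}_C(x;d)=\{w\mid \mathrm{dist}(x+td+\tfrac12t^2w,C)=o(t^2)\text{ as } t\downarrow0\}$. $C$ is outer second-order regular at $x$ in the direction $d\in\mathcal{T}_C(x)$ if for every sequence $x+t_kd+\tfrac12t_k^2w^k\in C$ with $t_k\downarrow0$ and $t_kw^k\to0$ one has $\mathrm{dist}(w^k,\mathcal{T}^2_C(x;d))\to0$;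 $C$ is second-order regular at $x$ in the direction $d$ if in addition $\mathcal{T}^2_C(x;d)=\mathcal{T}^{i,2}_C(x;d)$. For a mapping $\Upsilon$ and closed $S$, $\mathcal{F}(z)=\Upsilon(z)-S$ is (metrically) subregular at $\overline{x}$ for the origin in direction $d$ if there are $\kappa,\rho,\delta>0$ such that $\mathrm{dist}(x,\mathcal{F}^{-1}(0))\le\kappa\,\mathrm{dist}(\Upsilon(x),S)$ for all $x\in\overline{x}+V_{\rho,\delta}$, where $V_{\rho,\delta}=\{w\mid \|w\|\le\rho,\ \|\,\|d\|w-\|w\|d\,\|\le\delta\|w\|\|d\|\}$; for $d=0$ this is ordinary metric subregularity. *)

theory Defs
  imports "HOL-Analysis.Analysis"
begin

definition tangent_cone :: "'a::real_normed_vector set \<Rightarrow> 'a \<Rightarrow> 'a set" where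
  "tangent_cone C x = {d. \<exists>t dk. (\<forall>k. t k > (0::real)) \<and> t \<longlonglongrightarrow> 0 \<and> dk \<longlonglongrightarrow> d
      \<and> (\<forall>k. x + t k *\<^sub>R dk k \<in> C)}"

definition outer_so_tangent :: "'a::real_normed_vector set \<Rightarrow> 'a \<Rightarrow> 'a \<Rightarrow> 'a set" where
  "outer_so_tangent C x d = {w. \<exists>t. (\<forall>k. t k > (0::real)) \<and> t \<longlonglongrightarrow> 0 \<and>
      (\<lambda>k. infdist (x + t k *\<^sub>R d + ((t k)\<^sup>2 / 2) *\<^sub>R w) C / (t k)\<^sup>2) \<longlonglongrightarrow> 0}"

definition inner_so_tangent :: "'a::real_normed_vector set \<Rightarrow> 'a \<Rightarrow> 'a \<Rightarrow> 'a set" where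
  "inner_so_tangent C x d = {w.
      ((\<lambda>t::real. infdist (x + t *\<^sub>R d + (t\<^sup>2 / 2) *\<^sub>R w) C / t\<^sup>2) \<longlongrightarrow> 0) (at_right 0)}"

text \<open>Outer second-order regularity at x in direction d (with d in the tangent cone).
  The condition dist(w_k, T^2) \<rightarrow> 0 is written so that an empty T^2 counts as distance +\<infinity>.\<close>
definition outer_so_regular :: "'a::real_normed_vector set \<Rightarrow> 'a \<Rightarrow> 'a \<Rightarrow> bool" where
  "outer_so_regular C x d \<longleftrightarrow> d \<in> tangent_cone C x \<and>
     (\<forall>t w. (\<forall>k. t k > (0::real)) \<longrightarrow> t \<longlonglongrightarrow> 0 \<longrightarrow>
        (\<forall>k. x + t k *\<^sub>R d + ((t k)\<^sup>2 / 2) *\<^sub>R w k \<in> C) \<longrightarrow>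
        (\<lambda>k. t k *\<^sub>R w k) \<longlonglongrightarrow> 0 \<longrightarrow>
        (\<forall>\<epsilon>>0. eventually (\<lambda>k. \<exists>v\<in>outer_so_tangent C x d. dist (w k) v < \<epsilon>) sequentially))"

definition so_regular :: "'a::real_normed_vector set \<Rightarrow> 'a \<Rightarrow> 'a \<Rightarrow> bool" where
  "so_regular C x d \<longleftrightarrow> outer_so_regular C x d \<and>
     outer_so_tangent C x d = inner_so_tangent C x d"

definition dir_nbhd :: "'a::real_normed_vector \<Rightarrow> real \<Rightarrow> real \<Rightarrow> 'a set" where
  "dir_nbhd d \<rho> \<delta> = {w. norm w \<le> \<rho> \<and>
      norm (norm d *\<^sub>R w - norm w *\<^sub>R d) \<le> \<delta> * norm w * norm d}"

definition dir_metric_subregular ::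
  "('a::real_normed_vector \<Rightarrow> 'b::real_normed_vector) \<Rightarrow> 'b set \<Rightarrow> 'a \<Rightarrow> 'a \<Rightarrow> bool" where
  "dir_metric_subregular Ups S xbar d \<longleftrightarrow>
     (\<exists>\<kappa> \<rho> \<delta>. \<kappa> > 0 \<and> \<rho> > 0 \<and> \<delta> > 0 \<and>
        (\<forall>w\<in>dir_nbhd d \<rho> \<delta>. infdist (xbar + w) (Ups -` S) \<le> \<kappa> * infdist (Ups (xbar + w)) S))"

end

theory Submission
  imports Defs
begin

lemma taylor_P:
  fixes Ups :: "'a::euclidean_space \<Rightarrow> 'b::euclidean_space" and D :: "'a \<Rightarrow> ('a \<Rightarrow>\<^sub>L 'b)"
  assumes dU: "\<And>x. (Ups has_derivative blinfun_apply (D x)) (at x)"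
    and dD: "(D has_derivative D2) (at xbar)"
    and e: "\<epsilon> > 0"
  shows "\<exists>r>0. \<forall>h. norm h < r \<longrightarrow> norm (Ups (xbar+h) - Ups xbar - blinfun_apply (D xbar) h
            - (1/2) *\<^sub>R blinfun_apply (D2 h) h) \<le> \<epsilon> * (norm h)\<^sup>2"
proof -
  have lin: "linear D2" using dD has_derivative_linear by blast
  from dD e obtain r where r: "r > 0" and
    rr: "\<And>y. norm (y - xbar) < r \<Longrightarrow> norm (D y - D xbar - D2 (y - xbar)) \<le> \<epsilon> * norm (y - xbar)"
    unfolding has_derivative_at_alt by blast
  show ?thesis
  proof (intro exI[of _ r] conjI allI impI r)
    fix h :: 'a assume h: "norm h < r"
    define \<psi> where "\<psi> = (\<lambda>s::real. Ups (xbar + s *\<^sub>R h) - s *\<^sub>R blinfun_apply (D xbar) h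
        - (s\<^sup>2/2) *\<^sub>R blinfun_apply (D2 h) h)"
    define \<psi>' where "\<psi>' = (\<lambda>s::real. \<lambda>q::real. q *\<^sub>R (blinfun_apply (D (xbar + s *\<^sub>R h)) h
         - blinfun_apply (D xbar) h - s *\<^sub>R blinfun_apply (D2 h) h))"
    have der: "(\<psi> has_derivative \<psi>' s) (at s)" for s
    proof -
      have 1: "((\<lambda>s. xbar + s *\<^sub>R h) has_derivative (\<lambda>q. q *\<^sub>R h)) (at s)"
        by (auto intro!: derivative_eq_intros)
      have 2: "((\<lambda>s. Ups (xbar + s *\<^sub>R h)) has_derivative (\<lambda>q. blinfun_apply (D (xbar + s *\<^sub>R h)) (q *\<^sub>R h))) (at s)"
        using has_derivative_compose[OF 1 dU] by (simp add: o_def)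
      have 3: "((\<lambda>s::real. (s\<^sup>2/2) *\<^sub>R blinfun_apply (D2 h) h) has_derivative (\<lambda>q. (q * s) *\<^sub>R blinfun_apply (D2 h) h)) (at s)"
        by (auto intro!: derivative_eq_intros simp: algebra_simps)
      have 4: "((\<lambda>s::real. s *\<^sub>R blinfun_apply (D xbar) h) has_derivative (\<lambda>q. q *\<^sub>R blinfun_apply (D xbar) h)) (at s)"
        by (auto intro!: derivative_eq_intros)
      have "(\<psi> has_derivative (\<lambda>q. blinfun_apply (D (xbar + s *\<^sub>R h)) (q *\<^sub>R h) - q *\<^sub>R blinfun_apply (D xbar) h - (q * s) *\<^sub>R blinfun_apply (D2 h) h)) (at s)"
        unfolding \<psi>_def by (intro has_derivative_diff 2 3 4)
      moreover have "(\<lambda>q. blinfun_apply (D (xbar + s *\<^sub>R h)) (q *\<^sub>R h) - q *\<^sub>R blinfun_apply (D xbar) h - (q * s) *\<^sub>R blinfun_apply (D2 h) h) = \<psi>' s"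
        by (auto simp: \<psi>'_def blinfun.scaleR_right algebra_simps fun_eq_iff)
      ultimately show ?thesis by simp
    qed
    have cont: "continuous_on {0..1} \<psi>"
      using der has_derivative_continuous continuous_at_imp_continuous_on by blast
    obtain s where s: "s \<in> {0<..<1}" and sb: "norm (\<psi> 1 - \<psi> 0) \<le> norm (\<psi>' s (1 - 0))"
      using mvt_general[of 0 1 \<psi> \<psi>'] cont der by auto
    have e1: "\<psi> 1 - \<psi> 0 = Ups (xbar+h) - Ups xbar - blinfun_apply (D xbar) h
            - (1/2) *\<^sub>R blinfun_apply (D2 h) h" by (simp add: \<psi>_def)
    have e2: "\<psi>' s (1 - 0) = blinfun_apply (D (xbar + s *\<^sub>R h) - D xbar - D2 (s *\<^sub>R h)) h"
      by (simp add: \<psi>'_def linear_scale[OF lin] blinfun.diff_left blinfun.scaleR_left)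
    define N where "N = norm (D (xbar + s *\<^sub>R h) - D xbar - D2 (s *\<^sub>R h))"
    have e3: "norm (\<psi>' s (1 - 0)) \<le> N * norm h" unfolding e2 N_def by (rule norm_blinfun)
    have sh: "norm (s *\<^sub>R h) \<le> norm h"
      using s by (auto intro!: mult_left_le_one_le)
    have e4: "N \<le> \<epsilon> * norm (s *\<^sub>R h)"
      unfolding N_def using rr[of "xbar + s *\<^sub>R h"] sh h by simp
    have e5: "N * norm h \<le> \<epsilon> * norm (s *\<^sub>R h) * norm h"
      using e4 by (rule mult_right_mono) simp
    have e6: "\<epsilon> * norm (s *\<^sub>R h) * norm h \<le> \<epsilon> * (norm h)\<^sup>2"
      proof -
      have "norm (s *\<^sub>R h) * norm h \<le> norm h * norm h" using sh by (rule mult_right_mono) simp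
      then show ?thesis using e unfolding power2_eq_square mult.assoc by (intro mult_left_mono) auto
    qed
    show "norm (Ups (xbar+h) - Ups xbar - blinfun_apply (D xbar) h
            - (1/2) *\<^sub>R blinfun_apply (D2 h) h) \<le> \<epsilon> * (norm h)\<^sup>2"
      using sb e3 e5 e6 unfolding e1 by linarith
  qed
qed

lemma taylor_seq:
  fixes Ups :: "'a::euclidean_space \<Rightarrow> 'b::euclidean_space" and D :: "'a \<Rightarrow> ('a \<Rightarrow>\<^sub>L 'b)"
  assumes dU: "\<And>x. (Ups has_derivative blinfun_apply (D x)) (at x)"
    and dD: "(D has_derivative D2) (at xbar)"
    and tpos: "\<forall>k. t k > (0::real)" and t0: "t \<longlonglongrightarrow> 0" and tw: "(\<lambda>k. t k *\<^sub>R w k) \<longlonglongrightarrow> 0"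
  shows "(\<lambda>k. (Ups (xbar + t k *\<^sub>R d + ((t k)\<^sup>2/2) *\<^sub>R w k) - Ups xbar - t k *\<^sub>R blinfun_apply (D xbar) d
     - ((t k)\<^sup>2/2) *\<^sub>R (blinfun_apply (D xbar) (w k) + blinfun_apply (D2 d) d)) /\<^sub>R (t k)\<^sup>2) \<longlonglongrightarrow> 0"
proof -
  have lin: "bounded_linear D2" using dD has_derivative_bounded_linear by blast
  define q where "q = (\<lambda>k. d + (t k / 2) *\<^sub>R w k)"
  define h where "h = (\<lambda>k. t k *\<^sub>R q k)"
  define g where "g = (\<lambda>h. Ups (xbar+h) - Ups xbar - blinfun_apply (D xbar) h
            - (1/2) *\<^sub>R blinfun_apply (D2 h) h)"
  have qd: "q \<longlonglongrightarrow> d"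
  proof -
    have "(\<lambda>k. d + (1/2) *\<^sub>R (t k *\<^sub>R w k)) \<longlonglongrightarrow> d + (1/2) *\<^sub>R 0"
      by (intro tendsto_intros tw)
    then show ?thesis by (simp add: q_def)
  qed
  have h0: "h \<longlonglongrightarrow> 0"
    unfolding h_def using tendsto_scaleR[OF t0 qd] by simp
  have E: "(Ups (xbar + t k *\<^sub>R d + ((t k)\<^sup>2/2) *\<^sub>R w k) - Ups xbar - t k *\<^sub>R blinfun_apply (D xbar) d
     - ((t k)\<^sup>2/2) *\<^sub>R (blinfun_apply (D xbar) (w k) + blinfun_apply (D2 d) d)) /\<^sub>R (t k)\<^sup>2
     = g (h k) /\<^sub>R (t k)\<^sup>2 + (1/2) *\<^sub>R (blinfun_apply (D2 (q k)) (q k) - blinfun_apply (D2 d) d)" for k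
  proof -
    have tk: "t k \<noteq> 0" using tpos by (metis less_irrefl)
    have a1: "xbar + t k *\<^sub>R d + ((t k)\<^sup>2/2) *\<^sub>R w k = xbar + h k"
      by (simp add: h_def q_def scaleR_add_right power2_eq_square algebra_simps)
    have a2: "blinfun_apply (D xbar) (h k) = t k *\<^sub>R blinfun_apply (D xbar) d + ((t k)\<^sup>2/2) *\<^sub>R blinfun_apply (D xbar) (w k)"
      by (simp add: h_def q_def blinfun.add_right blinfun.scaleR_right power2_eq_square algebra_simps)
    have a3: "blinfun_apply (D2 (h k)) (h k) = (t k)\<^sup>2 *\<^sub>R blinfun_apply (D2 (q k)) (q k)"
      by (simp add: h_def linear_scale[OF bounded_linear.linear[OF lin]] blinfun.scaleR_left blinfun.scaleR_right power2_eq_square)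
    show ?thesis
      unfolding a1 g_def a3
      apply (simp add: a2 algebra_simps tk)
      done
  qed
  have T2: "(\<lambda>k. (1/2) *\<^sub>R (blinfun_apply (D2 (q k)) (q k) - blinfun_apply (D2 d) d)) \<longlonglongrightarrow> 0"
  proof -
    have "(\<lambda>k. D2 (q k)) \<longlonglongrightarrow> D2 d" using bounded_linear.tendsto[OF lin qd] .
    then have "(\<lambda>k. blinfun_apply (D2 (q k)) (q k)) \<longlonglongrightarrow> blinfun_apply (D2 d) d"
      using qd by (rule bounded_bilinear.tendsto[OF bounded_bilinear_blinfun_apply])
    then have "(\<lambda>k. (1/2) *\<^sub>R (blinfun_apply (D2 (q k)) (q k) - blinfun_apply (D2 d) d)) \<longlonglongrightarrow> (1/2) *\<^sub>R (blinfun_apply (D2 d) d - blinfun_apply (D2 d) d)"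
      by (rule tendsto_scaleR[OF tendsto_const tendsto_diff[OF _ tendsto_const]])
    then show ?thesis by simp
  qed
  have T1: "(\<lambda>k. g (h k) /\<^sub>R (t k)\<^sup>2) \<longlonglongrightarrow> 0"
  proof (rule tendstoI)
    fix \<epsilon> :: real assume e: "\<epsilon> > 0"
    define M where "M = (norm d + 1)\<^sup>2 + 1"
    have M: "M > 0" unfolding M_def by (simp add: add_nonneg_pos)
    obtain r where r: "r > 0" and rr: "\<And>h. norm h < r \<Longrightarrow> norm (g h) \<le> (\<epsilon>/M) * (norm h)\<^sup>2"
      using taylor_P[OF dU dD, of "\<epsilon>/M"] e M unfolding g_def by auto
    have ev1: "eventually (\<lambda>k. norm (h k) < r) sequentially"
      using h0 r by (metis tendsto_norm_zero_iff order_tendstoD(2) norm_zero)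
    have ev2: "eventually (\<lambda>k. dist (q k) d < 1) sequentially"
      using qd by (rule tendstoD) simp
    show "eventually (\<lambda>k. dist (g (h k) /\<^sub>R (t k)\<^sup>2) 0 < \<epsilon>) sequentially"
      using ev1 ev2
    proof eventually_elim
      case (elim k)
      have tk: "t k > 0" using tpos by simp
      have nq: "norm (q k) \<le> norm d + 1" using elim(2) norm_triangle_ineq2[of "q k" d]
        by (simp add: dist_norm)
      have nh: "norm (h k) = t k * norm (q k)" using tk by (simp add: h_def)
      have "norm (g (h k)) \<le> (\<epsilon>/M) * (t k)\<^sup>2 * (norm (q k))\<^sup>2"
        using rr[OF elim(1)] by (simp add: nh power_mult_distrib)
      also have "\<dots> \<le> (\<epsilon>/M) * (t k)\<^sup>2 * (norm d + 1)\<^sup>2"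
        using e M nq by (intro mult_left_mono power_mono) auto
      also have "\<dots> < \<epsilon> * (t k)\<^sup>2"
      proof -
        have "(norm d + 1)\<^sup>2 < M" by (simp add: M_def)
        then have "(norm d + 1)\<^sup>2 / M < 1" using M by simp
        then have "\<epsilon> * (t k)\<^sup>2 * ((norm d + 1)\<^sup>2 / M) < \<epsilon> * (t k)\<^sup>2 * 1"
          using e tk by (intro mult_strict_left_mono) auto
        then show ?thesis by (simp add: field_simps)
      qed
      finally have "norm (g (h k)) < \<epsilon> * (t k)\<^sup>2" .
      then show ?case using tk by (simp add: dist_norm field_simps)
    qed
  qed
  show ?thesis unfolding E using tendsto_add[OF T1 T2] by simp
qed

lemma dir_nbhd_ev:
  fixes h :: "nat \<Rightarrow> 'a::real_normed_vector"
  assumes rho: "\<rho> > 0" and del: "\<delta> > 0" and tpos: "\<forall>k. t k > (0::real)" and t0: "t \<longlonglongrightarrow> 0"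
    and hd: "(\<lambda>k. h k /\<^sub>R t k) \<longlonglongrightarrow> d"
  shows "eventually (\<lambda>k. h k \<in> dir_nbhd d \<rho> \<delta>) sequentially"
proof -
  define q where "q = (\<lambda>k. h k /\<^sub>R t k)"
  have hq: "h k = t k *\<^sub>R q k" for k proof -
    have "t k \<noteq> 0" using tpos by (metis less_irrefl)
    then show ?thesis by (simp add: q_def)
  qed
  have "(\<lambda>k. t k *\<^sub>R q k) \<longlonglongrightarrow> 0 *\<^sub>R d" using tendsto_scaleR[OF t0 hd] by (simp add: q_def)
  then have "(\<lambda>k. norm (h k)) \<longlonglongrightarrow> 0" using hq tendsto_norm_zero by fastforce
  then have ev1: "eventually (\<lambda>k. norm (h k) \<le> \<rho>) sequentially"
    using rho by (metis (mono_tags, lifting) eventually_mono less_imp_le order_tendstoD(2))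
  show ?thesis
  proof (cases "d = 0")
    case True
    then show ?thesis using ev1 by (auto simp: dir_nbhd_def elim: eventually_mono)
  next
    case False
    have qd: "q \<longlonglongrightarrow> d" using hd by (simp add: q_def)
    have f: "(\<lambda>k. norm (norm d *\<^sub>R q k - norm (q k) *\<^sub>R d)) \<longlonglongrightarrow> norm (norm d *\<^sub>R d - norm d *\<^sub>R d)"
      by (intro tendsto_intros qd)
    have g: "(\<lambda>k. \<delta> * norm (q k) * norm d) \<longlonglongrightarrow> \<delta> * norm d * norm d"
      by (intro tendsto_intros qd)
    have pos: "\<delta> * norm d * norm d > 0" using False del by simp
    have evf: "eventually (\<lambda>k. norm (norm d *\<^sub>R q k - norm (q k) *\<^sub>R d) < \<delta> * norm d * norm d / 2) sequentially"
      using f pos by (intro order_tendstoD(2)) auto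
    have evg: "eventually (\<lambda>k. \<delta> * norm (q k) * norm d > \<delta> * norm d * norm d / 2) sequentially"
      using g pos by (intro order_tendstoD(1)) auto
    show ?thesis using ev1 evf evg
    proof eventually_elim
      case (elim k)
      have tk: "t k > 0" using tpos by simp
      have "norm (norm d *\<^sub>R h k - norm (h k) *\<^sub>R d) = t k * norm (norm d *\<^sub>R q k - norm (q k) *\<^sub>R d)"
      proof -
        have "norm d *\<^sub>R h k - norm (h k) *\<^sub>R d = t k *\<^sub>R (norm d *\<^sub>R q k - norm (q k) *\<^sub>R d)"
          using tk by (simp add: hq algebra_simps)
        then show ?thesis using tk by simp
      qed
      also have "\<dots> \<le> t k * (\<delta> * norm (q k) * norm d)"
        using elim tk by (intro mult_left_mono) auto
      also have "\<dots> = \<delta> * norm (h k) * norm d" using tk by (simp add: hq)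
      finally show ?case using elim by (simp add: dir_nbhd_def)
    qed
  qed
qed

locale psetting =
  fixes Ups :: "'a::euclidean_space \<Rightarrow> 'b::euclidean_space" and D :: "'a \<Rightarrow> ('a \<Rightarrow>\<^sub>L 'b)"
    and D2 :: "'a \<Rightarrow> ('a \<Rightarrow>\<^sub>L 'b)" and S :: "'b set" and xbar d :: 'a and \<kappa> \<rho> \<delta> :: real
  assumes closedS: "closed S"
    and dU: "\<And>x. (Ups has_derivative blinfun_apply (D x)) (at x)"
    and dD: "(D has_derivative D2) (at xbar)"
    and xin: "Ups xbar \<in> S"
    and kpos: "\<kappa> > 0" and rpos: "\<rho> > 0" and dpos: "\<delta> > 0"
    and sub: "\<forall>w\<in>dir_nbhd d \<rho> \<delta>. infdist (xbar + w) (Ups -` S) \<le> \<kappa> * infdist (Ups (xbar + w)) S"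
begin

lemma closedP: "closed (Ups -` S)"
proof -
  have "continuous_on UNIV Ups"
    using dU has_derivative_continuous continuous_at_imp_continuous_on by blast
  then show ?thesis using closedS by (metis closed_vimage)
qed

lemma nearest: obtains p where "p \<in> Ups -` S" "infdist x (Ups -` S) = dist x p"
  using infdist_attains_inf[OF closedP, of x] xin by blast

lemma nearest_fun: obtains pr where "\<And>x. pr x \<in> Ups -` S" "\<And>x. infdist x (Ups -` S) = dist x (pr x)"
proof -
  have "\<forall>x. \<exists>p. p \<in> Ups -` S \<and> infdist x (Ups -` S) = dist x p" using nearest by metis
  then show ?thesis using that by metis
qed

lemma sub_seq:
  assumes tpos: "\<forall>k. t k > (0::real)" and t0: "t \<longlonglongrightarrow> 0"
    and hd: "(\<lambda>k. h k /\<^sub>R t k) \<longlonglongrightarrow> d"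
  shows "eventually (\<lambda>k. infdist (xbar + h k) (Ups -` S) \<le> \<kappa> * infdist (Ups (xbar + h k)) S) sequentially"
  using dir_nbhd_ev[OF rpos dpos tpos t0 hd] sub by (auto elim: eventually_mono)

lemma tangent:
  assumes "blinfun_apply (D xbar) d \<in> tangent_cone S (Ups xbar)"
  shows "d \<in> tangent_cone (Ups -` S) xbar"
proof -
  obtain t dk where tpos: "\<forall>k. t k > (0::real)" and t0: "t \<longlonglongrightarrow> 0" and dkl: "dk \<longlonglongrightarrow> blinfun_apply (D xbar) d"
    and inS: "\<forall>k. Ups xbar + t k *\<^sub>R dk k \<in> S"
    using assms unfolding tangent_cone_def by blast
  have tk: "t k \<noteq> 0" for k using tpos by (metis less_irrefl)
  define E where "E = (\<lambda>k. (Ups (xbar + t k *\<^sub>R d + ((t k)\<^sup>2/2) *\<^sub>R (0::'a)) - Ups xbar - t k *\<^sub>R blinfun_apply (D xbar) d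
     - ((t k)\<^sup>2/2) *\<^sub>R (blinfun_apply (D xbar) 0 + blinfun_apply (D2 d) d)) /\<^sub>R (t k)\<^sup>2)"
  have E0: "E \<longlonglongrightarrow> 0" unfolding E_def by (rule taylor_seq[OF dU dD tpos t0]) simp
  define R where "R = (\<lambda>k. (Ups (xbar + t k *\<^sub>R d) - Ups xbar - t k *\<^sub>R blinfun_apply (D xbar) d) /\<^sub>R t k)"
  have RE: "R k = t k *\<^sub>R (E k + (1/2) *\<^sub>R blinfun_apply (D2 d) d)" for k
  proof -
    define X where "X = Ups (xbar + t k *\<^sub>R d) - Ups xbar - t k *\<^sub>R blinfun_apply (D xbar) d"
    have "E k = inverse ((t k)\<^sup>2) *\<^sub>R X - (1/2) *\<^sub>R blinfun_apply (D2 d) d"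
      using tk[of k] by (simp add: E_def X_def scaleR_diff_right)
    then have "t k *\<^sub>R (E k + (1/2) *\<^sub>R blinfun_apply (D2 d) d) = (t k * inverse ((t k)\<^sup>2)) *\<^sub>R X"
      by simp
    also have "t k * inverse ((t k)\<^sup>2) = inverse (t k)" using tk[of k] by (simp add: power2_eq_square)
    finally show ?thesis by (simp add: R_def X_def)
  qed
  have R0: "R \<longlonglongrightarrow> 0"
    unfolding RE using tendsto_scaleR[OF t0 tendsto_add[OF E0 tendsto_const]] by simp
  define c where "c = (\<lambda>k. norm (R k + blinfun_apply (D xbar) d - dk k))"
  have c0: "c \<longlonglongrightarrow> 0"
  proof -
    have "(\<lambda>k. R k + blinfun_apply (D xbar) d - dk k) \<longlonglongrightarrow> 0 + blinfun_apply (D xbar) d - blinfun_apply (D xbar) d"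
      by (intro tendsto_intros R0 dkl)
    then show ?thesis unfolding c_def using tendsto_norm_zero by force
  qed
  have bnd: "infdist (Ups (xbar + t k *\<^sub>R d)) S / t k \<le> c k" for k
  proof -
    have a: "infdist (Ups (xbar + t k *\<^sub>R d)) S \<le> dist (Ups (xbar + t k *\<^sub>R d)) (Ups xbar + t k *\<^sub>R dk k)"
      using inS infdist_le by blast
    have b: "Ups (xbar + t k *\<^sub>R d) - (Ups xbar + t k *\<^sub>R dk k) = t k *\<^sub>R (R k + blinfun_apply (D xbar) d - dk k)"
      using tk[of k] by (simp add: R_def algebra_simps)
    have tp: "t k > 0" using tpos by simp
    have "dist (Ups (xbar + t k *\<^sub>R d)) (Ups xbar + t k *\<^sub>R dk k) = t k * c k"
      using tp by (simp add: dist_norm c_def b)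
    then show ?thesis using a tp by (simp add: divide_simps mult.commute)
  qed
  have ev: "eventually (\<lambda>k. infdist (xbar + t k *\<^sub>R d) (Ups -` S) \<le> \<kappa> * infdist (Ups (xbar + t k *\<^sub>R d)) S) sequentially"
    by (rule sub_seq[OF tpos t0]) (use tk in simp)
  obtain pr where prP: "\<And>x. pr x \<in> Ups -` S" and prd: "\<And>x. infdist x (Ups -` S) = dist x (pr x)"
    using nearest_fun by blast
  define p where "p = (\<lambda>k. pr (xbar + t k *\<^sub>R d))"
  have pP: "\<And>k. p k \<in> Ups -` S" and pd: "\<And>k. infdist (xbar + t k *\<^sub>R d) (Ups -` S) = dist (xbar + t k *\<^sub>R d) (p k)"
    using prP prd by (auto simp: p_def)
  define dk' where "dk' = (\<lambda>k. (p k - xbar) /\<^sub>R t k)"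
  have "(\<lambda>k. dk' k - d) \<longlonglongrightarrow> 0"
  proof (rule Lim_null_comparison)
    show "eventually (\<lambda>k. norm (dk' k - d) \<le> \<kappa> * c k) sequentially"
      using ev
    proof eventually_elim
      case (elim k)
      have "dk' k - d = (p k - (xbar + t k *\<^sub>R d)) /\<^sub>R t k" using tk[of k] by (simp add: dk'_def algebra_simps)
      then have "norm (dk' k - d) = infdist (xbar + t k *\<^sub>R d) (Ups -` S) / t k"
        using tpos[rule_format, of k] pd[of k] by (simp add: dist_norm norm_minus_commute divide_simps)
      also have "\<dots> \<le> \<kappa> * infdist (Ups (xbar + t k *\<^sub>R d)) S / t k"
        using elim tpos[rule_format, of k] by (intro divide_right_mono) auto
      also have "\<dots> \<le> \<kappa> * c k" using bnd[of k] kpos by (simp add: mult_left_mono times_divide_eq_right[symmetric] del: times_divide_eq_right)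
      finally show ?case .
    qed
    show "(\<lambda>k. \<kappa> * c k) \<longlonglongrightarrow> 0" using tendsto_mult[OF tendsto_const c0] by simp
  qed
  then have "dk' \<longlonglongrightarrow> d" using LIM_zero_cancel by blast
  moreover have "xbar + t k *\<^sub>R dk' k \<in> Ups -` S" for k using pP tk[of k] by (simp add: dk'_def)
  ultimately show ?thesis unfolding tangent_cone_def using tpos t0 by blast
qed


lemma approx:
  assumes u: "u \<in> outer_so_tangent S (Ups xbar) (blinfun_apply (D xbar) d)"
  shows "\<exists>v'\<in>outer_so_tangent (Ups -` S) xbar d. dist v v' \<le> \<kappa> * norm (blinfun_apply (D xbar) v + blinfun_apply (D2 d) d - u)"
proof -
  let ?A = "blinfun_apply (D xbar)" and ?b = "blinfun_apply (D2 d) d" and ?y = "Ups xbar"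
  define c0 where "c0 = norm (?A v + ?b - u)"
  obtain s where spos: "\<forall>k. s k > (0::real)" and s0: "s \<longlonglongrightarrow> 0"
    and su: "(\<lambda>k. infdist (?y + s k *\<^sub>R ?A d + ((s k)\<^sup>2 / 2) *\<^sub>R u) S / (s k)\<^sup>2) \<longlonglongrightarrow> 0"
    using u unfolding outer_so_tangent_def by blast
  have sk: "s k \<noteq> 0" for k using spos by (metis less_irrefl)
  define a where "a = (\<lambda>k. infdist (?y + s k *\<^sub>R ?A d + ((s k)\<^sup>2 / 2) *\<^sub>R u) S / (s k)\<^sup>2)"
  define x where "x = (\<lambda>k. xbar + s k *\<^sub>R d + ((s k)\<^sup>2/2) *\<^sub>R v)"
  define E where "E = (\<lambda>k. (Ups (xbar + s k *\<^sub>R d + ((s k)\<^sup>2/2) *\<^sub>R v) - Ups xbar - s k *\<^sub>R ?A d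
     - ((s k)\<^sup>2/2) *\<^sub>R (?A v + ?b)) /\<^sub>R (s k)\<^sup>2)"
  have E0: "E \<longlonglongrightarrow> 0" unfolding E_def
  proof (rule taylor_seq[OF dU dD spos s0])
    show "(\<lambda>k. s k *\<^sub>R v) \<longlonglongrightarrow> 0" using tendsto_scaleR[OF s0 tendsto_const[of v]] by simp
  qed
  have bnd1: "infdist (Ups (x k)) S / (s k)\<^sup>2 \<le> a k + norm (E k) + c0 / 2" for k
  proof -
    have sp: "(s k)\<^sup>2 > 0" using sk[of k] by simp
    have "Ups (x k) - (?y + s k *\<^sub>R ?A d + ((s k)\<^sup>2 / 2) *\<^sub>R u) = (s k)\<^sup>2 *\<^sub>R E k + ((s k)\<^sup>2/2) *\<^sub>R (?A v + ?b - u)"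
    proof -
      have "(s k)\<^sup>2 *\<^sub>R E k = Ups (x k) - ?y - s k *\<^sub>R ?A d - ((s k)\<^sup>2/2) *\<^sub>R (?A v + ?b)"
        using sp by (simp add: E_def x_def)
      then show ?thesis by (simp add: algebra_simps)
    qed
    then have "dist (Ups (x k)) (?y + s k *\<^sub>R ?A d + ((s k)\<^sup>2 / 2) *\<^sub>R u) = norm ((s k)\<^sup>2 *\<^sub>R E k + ((s k)\<^sup>2/2) *\<^sub>R (?A v + ?b - u))"
      by (simp add: dist_norm)
    also have "\<dots> \<le> norm ((s k)\<^sup>2 *\<^sub>R E k) + norm (((s k)\<^sup>2/2) *\<^sub>R (?A v + ?b - u))"
      by (rule norm_triangle_ineq)
    also have "\<dots> = (s k)\<^sup>2 * norm (E k) + ((s k)\<^sup>2/2) * c0"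
      using sp by (simp add: c0_def)
    finally have "dist (Ups (x k)) (?y + s k *\<^sub>R ?A d + ((s k)\<^sup>2 / 2) *\<^sub>R u) \<le> (s k)\<^sup>2 * norm (E k) + ((s k)\<^sup>2/2) * c0" .
    then have "infdist (Ups (x k)) S \<le> (s k)\<^sup>2 * a k + ((s k)\<^sup>2 * norm (E k) + ((s k)\<^sup>2/2) * c0)"
      using infdist_triangle[of "Ups (x k)" S "?y + s k *\<^sub>R ?A d + ((s k)\<^sup>2 / 2) *\<^sub>R u"] sp
      by (simp add: a_def)
    then show ?thesis using sp by (simp add: divide_simps algebra_simps)
  qed
  have ev: "eventually (\<lambda>k. infdist (x k) (Ups -` S) \<le> \<kappa> * infdist (Ups (x k)) S) sequentially"
  proof -
    have "(\<lambda>k. (s k *\<^sub>R d + ((s k)\<^sup>2/2) *\<^sub>R v) /\<^sub>R s k) \<longlonglongrightarrow> d"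
    proof -
      have "(\<lambda>k. d + (1/2) *\<^sub>R (s k *\<^sub>R v)) \<longlonglongrightarrow> d + (1/2) *\<^sub>R (0 *\<^sub>R v)"
        by (intro tendsto_intros s0)
      moreover have "(s k *\<^sub>R d + ((s k)\<^sup>2/2) *\<^sub>R v) /\<^sub>R s k = d + (1/2) *\<^sub>R (s k *\<^sub>R v)" for k
        using sk[of k] by (simp add: power2_eq_square scaleR_add_right)
      ultimately show ?thesis by simp
    qed
    from sub_seq[OF spos s0 this] show ?thesis by (simp add: x_def add.assoc)
  qed
  obtain pr where prP: "\<And>x. pr x \<in> Ups -` S" and prd: "\<And>x. infdist x (Ups -` S) = dist x (pr x)"
    using nearest_fun by blast
  define v' where "v' = (\<lambda>k. (2 / (s k)\<^sup>2) *\<^sub>R (pr (x k) - xbar - s k *\<^sub>R d))"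
  have pv': "pr (x k) = xbar + s k *\<^sub>R d + ((s k)\<^sup>2/2) *\<^sub>R v' k" for k
    using sk[of k] by (simp add: v'_def)
  have nv': "norm (v' k - v) = 2 * infdist (x k) (Ups -` S) / (s k)\<^sup>2" for k
  proof -
    have "v' k - v = (2 / (s k)\<^sup>2) *\<^sub>R (pr (x k) - x k)"
    proof -
      have "v = (2 / (s k)\<^sup>2) *\<^sub>R (x k - xbar - s k *\<^sub>R d)" using sk[of k] by (simp add: x_def)
      then have "v' k - v = (2 / (s k)\<^sup>2) *\<^sub>R (pr (x k) - xbar - s k *\<^sub>R d) - (2 / (s k)\<^sup>2) *\<^sub>R (x k - xbar - s k *\<^sub>R d)"
        by (simp add: v'_def)
      also have "\<dots> = (2 / (s k)\<^sup>2) *\<^sub>R (pr (x k) - x k)" by (simp add: scaleR_diff_right[symmetric])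
      finally show ?thesis .
    qed
    then show ?thesis using sk[of k] by (simp add: prd dist_norm norm_minus_commute)
  qed
  define \<eta> where "\<eta> = (\<lambda>k. max 0 (norm (v' k - v) - \<kappa> * c0))"
  have \<eta>0: "\<eta> \<longlonglongrightarrow> 0"
  proof (rule Lim_null_comparison)
    show "eventually (\<lambda>k. norm (\<eta> k) \<le> 2 * \<kappa> * (a k + norm (E k))) sequentially"
      using ev
    proof eventually_elim
      case (elim k)
      have "norm (v' k - v) \<le> 2 * (\<kappa> * infdist (Ups (x k)) S) / (s k)\<^sup>2"
        unfolding nv' using elim sk[of k] by (intro divide_right_mono) auto
      also have "\<dots> = 2 * \<kappa> * (infdist (Ups (x k)) S / (s k)\<^sup>2)" by simp
      also have "\<dots> \<le> 2 * \<kappa> * (a k + norm (E k) + c0 / 2)"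
        using bnd1[of k] kpos by (intro mult_left_mono) auto
      finally have "norm (v' k - v) - \<kappa> * c0 \<le> 2 * \<kappa> * (a k + norm (E k))"
        by (simp add: algebra_simps)
      moreover have "0 \<le> 2 * \<kappa> * (a k + norm (E k))"
        using kpos by (simp add: a_def infdist_nonneg)
      ultimately show ?case by (simp add: \<eta>_def)
    qed
    have "(\<lambda>k. 2 * \<kappa> * (a k + norm (E k))) \<longlonglongrightarrow> 2 * \<kappa> * (0 + norm (0::'b))"
      using su E0 unfolding a_def by (intro tendsto_intros)
    then show "(\<lambda>k. 2 * \<kappa> * (a k + norm (E k))) \<longlonglongrightarrow> 0" by simp
  qed
  obtain B where B: "\<forall>k. norm (\<eta> k) \<le> B"
    using convergent_imp_Bseq[of \<eta>] \<eta>0 by (metis BseqE convergent_def)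
  have le: "norm (v' k - v) \<le> \<kappa> * c0 + \<eta> k" for k by (simp add: \<eta>_def)
  have "bounded (range v')"
    unfolding bounded_iff
  proof (intro exI ballI)
    fix z assume "z \<in> range v'"
    then obtain k where z: "z = v' k" by blast
    have "norm (v' k) \<le> norm v + norm (v' k - v)" by (metis add.commute diff_add_cancel norm_triangle_ineq)
    also have "\<dots> \<le> norm v + (\<kappa> * c0 + B)" using le[of k] B[rule_format, of k] by simp
    finally show "norm z \<le> norm v + (\<kappa> * c0 + B)" using z by simp
  qed
  then obtain vs r where r: "strict_mono r" and vr: "(v' \<circ> r) \<longlonglongrightarrow> vs"
    using bounded_imp_convergent_subsequence by blast
  have "norm (vs - v) \<le> \<kappa> * c0 + 0"
  proof (rule tendsto_le[OF trivial_limit_sequentially])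
    show "(\<lambda>k. norm ((v' \<circ> r) k - v)) \<longlonglongrightarrow> norm (vs - v)" by (intro tendsto_intros vr)
    show "(\<lambda>k. \<kappa> * c0 + (\<eta> \<circ> r) k) \<longlonglongrightarrow> \<kappa> * c0 + 0"
      by (intro tendsto_intros LIMSEQ_subseq_LIMSEQ[OF \<eta>0 r])
    show "eventually (\<lambda>k. norm ((v' \<circ> r) k - v) \<le> \<kappa> * c0 + (\<eta> \<circ> r) k) sequentially"
      using le by simp
  qed
  then have dvs: "dist v vs \<le> \<kappa> * c0" by (simp add: dist_norm norm_minus_commute)
  have "vs \<in> outer_so_tangent (Ups -` S) xbar d"
    unfolding outer_so_tangent_def
  proof (intro CollectI exI conjI)
    show "\<forall>k. (s \<circ> r) k > 0" using spos by simp
    show "(s \<circ> r) \<longlonglongrightarrow> 0" using LIMSEQ_subseq_LIMSEQ[OF s0 r] .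
    show "(\<lambda>k. infdist (xbar + (s \<circ> r) k *\<^sub>R d + (((s \<circ> r) k)\<^sup>2 / 2) *\<^sub>R vs) (Ups -` S) / ((s \<circ> r) k)\<^sup>2) \<longlonglongrightarrow> 0"
    proof (rule Lim_null_comparison)
      show "eventually (\<lambda>k. norm (infdist (xbar + (s \<circ> r) k *\<^sub>R d + (((s \<circ> r) k)\<^sup>2 / 2) *\<^sub>R vs) (Ups -` S) / ((s \<circ> r) k)\<^sup>2)
          \<le> norm (vs - (v' \<circ> r) k) / 2) sequentially"
      proof (rule always_eventually, rule allI)
        fix k
        let ?s = "s (r k)"
        have sp: "?s\<^sup>2 > 0" using sk[of "r k"] by simp
        have "infdist (xbar + ?s *\<^sub>R d + (?s\<^sup>2 / 2) *\<^sub>R vs) (Ups -` S) \<le> dist (xbar + ?s *\<^sub>R d + (?s\<^sup>2 / 2) *\<^sub>R vs) (pr (x (r k)))"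
          by (rule infdist_le[OF prP])
        also have "\<dots> = (?s\<^sup>2 / 2) * norm (vs - v' (r k))"
          unfolding pv' dist_norm using sp by (simp add: scaleR_diff_right[symmetric])
        finally show "norm (infdist (xbar + (s \<circ> r) k *\<^sub>R d + (((s \<circ> r) k)\<^sup>2 / 2) *\<^sub>R vs) (Ups -` S) / ((s \<circ> r) k)\<^sup>2)
          \<le> norm (vs - (v' \<circ> r) k) / 2"
          using sp by (simp add: infdist_nonneg divide_simps) (metis mult.commute)
      qed
      have "(\<lambda>k. norm (vs - (v' \<circ> r) k) / 2) \<longlonglongrightarrow> norm (vs - vs) / 2" by (intro tendsto_intros vr) auto
      then show "(\<lambda>k. norm (vs - (v' \<circ> r) k) / 2) \<longlonglongrightarrow> 0" by simp
    qed
  qed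
  then show ?thesis using dvs unfolding c0_def by blast
qed


lemma outer_reg:
  assumes R: "outer_so_regular S (Ups xbar) (blinfun_apply (D xbar) d)"
  shows "outer_so_regular (Ups -` S) xbar d"
  unfolding outer_so_regular_def
proof (intro conjI allI impI)
  let ?A = "blinfun_apply (D xbar)" and ?b = "blinfun_apply (D2 d) d" and ?y = "Ups xbar"
  show "d \<in> tangent_cone (Ups -` S) xbar" using R tangent by (simp add: outer_so_regular_def)
  fix t w and \<epsilon> :: real
  assume tpos: "\<forall>k. t k > 0" and t0: "t \<longlonglongrightarrow> 0"
    and mem: "\<forall>k. xbar + t k *\<^sub>R d + ((t k)\<^sup>2 / 2) *\<^sub>R w k \<in> Ups -` S"
    and tw: "(\<lambda>k. t k *\<^sub>R w k) \<longlonglongrightarrow> 0" and e: "\<epsilon> > 0"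
  have tk: "t k \<noteq> 0" for k using tpos by (metis less_irrefl)
  define x where "x = (\<lambda>k. xbar + t k *\<^sub>R d + ((t k)\<^sup>2 / 2) *\<^sub>R w k)"
  define E where "E = (\<lambda>k. (Ups (xbar + t k *\<^sub>R d + ((t k)\<^sup>2/2) *\<^sub>R w k) - Ups xbar - t k *\<^sub>R ?A d
     - ((t k)\<^sup>2/2) *\<^sub>R (?A (w k) + ?b)) /\<^sub>R (t k)\<^sup>2)"
  have E0: "E \<longlonglongrightarrow> 0" unfolding E_def by (rule taylor_seq[OF dU dD tpos t0 tw])
  define z where "z = (\<lambda>k. ?A (w k) + ?b + 2 *\<^sub>R E k)"
  have inS: "\<forall>k. ?y + t k *\<^sub>R ?A d + ((t k)\<^sup>2 / 2) *\<^sub>R z k \<in> S"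
  proof
    fix k
    have sp: "(t k)\<^sup>2 > 0" using tk[of k] by simp
    have "(t k)\<^sup>2 *\<^sub>R E k = Ups (x k) - ?y - t k *\<^sub>R ?A d - ((t k)\<^sup>2/2) *\<^sub>R (?A (w k) + ?b)"
      using sp by (simp add: E_def x_def)
    then have "Ups (x k) = ?y + t k *\<^sub>R ?A d + ((t k)\<^sup>2 / 2) *\<^sub>R z k"
      by (simp add: z_def algebra_simps)
    then show "?y + t k *\<^sub>R ?A d + ((t k)\<^sup>2 / 2) *\<^sub>R z k \<in> S" using mem[rule_format, of k] by (simp add: x_def)
  qed
  have tz: "(\<lambda>k. t k *\<^sub>R z k) \<longlonglongrightarrow> 0"
  proof -
    have eq: "t k *\<^sub>R z k = ?A (t k *\<^sub>R w k) + t k *\<^sub>R ?b + 2 *\<^sub>R (t k *\<^sub>R E k)" for k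
      by (simp add: z_def blinfun.scaleR_right algebra_simps)
    have "(\<lambda>k. ?A (t k *\<^sub>R w k) + t k *\<^sub>R ?b + 2 *\<^sub>R (t k *\<^sub>R E k)) \<longlonglongrightarrow> ?A 0 + 0 *\<^sub>R ?b + 2 *\<^sub>R (0 *\<^sub>R 0)"
      by (intro tendsto_intros tw t0 E0)
    then show ?thesis unfolding eq by simp
  qed
  define \<epsilon>' where "\<epsilon>' = \<epsilon> / (2 * \<kappa>)"
  have e': "\<epsilon>' > 0" using e kpos by (simp add: \<epsilon>'_def)
  have ev1: "eventually (\<lambda>k. \<exists>u\<in>outer_so_tangent S ?y (?A d). dist (z k) u < \<epsilon>') sequentially"
    using R tpos t0 inS tz e' unfolding outer_so_regular_def by blast
  have ev2: "eventually (\<lambda>k. norm (2 *\<^sub>R E k) < \<epsilon>') sequentially"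
  proof -
    have "(\<lambda>k. norm (2 *\<^sub>R E k)) \<longlonglongrightarrow> norm (2 *\<^sub>R (0::'b))" by (intro tendsto_intros E0)
    then show ?thesis using e' by (intro order_tendstoD(2)) auto
  qed
  show "eventually (\<lambda>k. \<exists>v\<in>outer_so_tangent (Ups -` S) xbar d. dist (w k) v < \<epsilon>) sequentially"
    using ev1 ev2
  proof eventually_elim
    case (elim k)
    then obtain u where u: "u \<in> outer_so_tangent S ?y (?A d)" and du: "dist (z k) u < \<epsilon>'" by blast
    obtain v where v: "v \<in> outer_so_tangent (Ups -` S) xbar d" and dv: "dist (w k) v \<le> \<kappa> * norm (?A (w k) + ?b - u)"
      using approx[OF u, of "w k"] by blast
    have "?A (w k) + ?b - u = (z k - u) - 2 *\<^sub>R E k" by (simp add: z_def)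
    then have "norm (?A (w k) + ?b - u) \<le> dist (z k) u + norm (2 *\<^sub>R E k)"
      by (metis dist_norm norm_triangle_ineq4)
    also have "\<dots> < 2 * \<epsilon>'" using du elim(2) by simp
    finally have "\<kappa> * norm (?A (w k) + ?b - u) < \<kappa> * (2 * \<epsilon>')" using kpos by simp
    also have "\<kappa> * (2 * \<epsilon>') = \<epsilon>" using kpos by (simp add: \<epsilon>'_def)
    finally show ?case using v dv by force
  qed
qed


lemma inner_sub_outer: "inner_so_tangent C x0 d0 \<subseteq> outer_so_tangent C x0 d0"
proof
  fix w assume "w \<in> inner_so_tangent C x0 d0"
  then have f: "((\<lambda>t::real. infdist (x0 + t *\<^sub>R d0 + (t\<^sup>2 / 2) *\<^sub>R w) C / t\<^sup>2) \<longlongrightarrow> 0) (at_right 0)"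
    by (simp add: inner_so_tangent_def)
  define t where "t = (\<lambda>k::nat. inverse (real (Suc k)))"
  have tpos: "\<forall>k. t k > 0" by (simp add: t_def)
  have t0: "t \<longlonglongrightarrow> 0" unfolding t_def by (rule LIMSEQ_inverse_real_of_nat)
  have "filterlim t (at_right 0) sequentially"
    using tendsto_imp_filterlim_at_right[OF t0] tpos by simp
  from filterlim_compose[OF f this] tpos t0 show "w \<in> outer_so_tangent C x0 d0"
    unfolding outer_so_tangent_def by blast
qed

lemma outer_sub_inner:
  assumes eqS: "outer_so_tangent S (Ups xbar) (blinfun_apply (D xbar) d) = inner_so_tangent S (Ups xbar) (blinfun_apply (D xbar) d)"
  shows "outer_so_tangent (Ups -` S) xbar d \<subseteq> inner_so_tangent (Ups -` S) xbar d"
proof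
  let ?A = "blinfun_apply (D xbar)" and ?b = "blinfun_apply (D2 d) d" and ?y = "Ups xbar"
  fix w assume "w \<in> outer_so_tangent (Ups -` S) xbar d"
  then obtain s where spos: "\<forall>k. s k > (0::real)" and s0: "s \<longlonglongrightarrow> 0"
    and sw: "(\<lambda>k. infdist (xbar + s k *\<^sub>R d + ((s k)\<^sup>2 / 2) *\<^sub>R w) (Ups -` S) / (s k)\<^sup>2) \<longlonglongrightarrow> 0"
    unfolding outer_so_tangent_def by blast
  have sk: "s k \<noteq> 0" for k using spos by (metis less_irrefl)
  define x where "x = (\<lambda>k. xbar + s k *\<^sub>R d + ((s k)\<^sup>2/2) *\<^sub>R w)"
  obtain pr where prP: "\<And>x. pr x \<in> Ups -` S" and prd: "\<And>x. infdist x (Ups -` S) = dist x (pr x)"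
    using nearest_fun by blast
  define w' where "w' = (\<lambda>k. (2 / (s k)\<^sup>2) *\<^sub>R (pr (x k) - xbar - s k *\<^sub>R d))"
  have pw': "pr (x k) = xbar + s k *\<^sub>R d + ((s k)\<^sup>2/2) *\<^sub>R w' k" for k
    using sk[of k] by (simp add: w'_def)
  have nw': "norm (w' k - w) = 2 * (infdist (x k) (Ups -` S) / (s k)\<^sup>2)" for k
  proof -
    have "w' k - w = (2 / (s k)\<^sup>2) *\<^sub>R (pr (x k) - x k)"
    proof -
      have "w = (2 / (s k)\<^sup>2) *\<^sub>R (x k - xbar - s k *\<^sub>R d)" using sk[of k] by (simp add: x_def)
      then have "w' k - w = (2 / (s k)\<^sup>2) *\<^sub>R (pr (x k) - xbar - s k *\<^sub>R d) - (2 / (s k)\<^sup>2) *\<^sub>R (x k - xbar - s k *\<^sub>R d)"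
        by (simp add: w'_def)
      also have "\<dots> = (2 / (s k)\<^sup>2) *\<^sub>R (pr (x k) - x k)" by (simp add: scaleR_diff_right[symmetric])
      finally show ?thesis .
    qed
    then show ?thesis using sk[of k] by (simp add: prd dist_norm norm_minus_commute)
  qed
  have ww: "(\<lambda>k. w' k - w) \<longlonglongrightarrow> 0"
  proof (rule Lim_null_comparison)
    show "eventually (\<lambda>k. norm (w' k - w) \<le> 2 * (infdist (x k) (Ups -` S) / (s k)\<^sup>2)) sequentially"
      by (simp add: nw')
    show "(\<lambda>k. 2 * (infdist (x k) (Ups -` S) / (s k)\<^sup>2)) \<longlonglongrightarrow> 0"
      using tendsto_mult[OF tendsto_const[of 2] sw] by (simp add: x_def)
  qed
  then have w'w: "w' \<longlonglongrightarrow> w" using LIM_zero_cancel by blast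
  define E where "E = (\<lambda>k. (Ups (xbar + s k *\<^sub>R d + ((s k)\<^sup>2/2) *\<^sub>R w' k) - Ups xbar - s k *\<^sub>R ?A d
     - ((s k)\<^sup>2/2) *\<^sub>R (?A (w' k) + ?b)) /\<^sub>R (s k)\<^sup>2)"
  have E0: "E \<longlonglongrightarrow> 0" unfolding E_def
  proof (rule taylor_seq[OF dU dD spos s0])
    show "(\<lambda>k. s k *\<^sub>R w' k) \<longlonglongrightarrow> 0" using tendsto_scaleR[OF s0 w'w] by simp
  qed
  define u where "u = ?A w + ?b"
  have "u \<in> outer_so_tangent S ?y (?A d)"
    unfolding outer_so_tangent_def
  proof (intro CollectI exI[of _ s] conjI spos s0)
    show "(\<lambda>k. infdist (?y + s k *\<^sub>R ?A d + ((s k)\<^sup>2 / 2) *\<^sub>R u) S / (s k)\<^sup>2) \<longlonglongrightarrow> 0"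
    proof (rule Lim_null_comparison)
      show "eventually (\<lambda>k. norm (infdist (?y + s k *\<^sub>R ?A d + ((s k)\<^sup>2 / 2) *\<^sub>R u) S / (s k)\<^sup>2)
           \<le> norm (E k) + norm (?A (w' k - w)) / 2) sequentially"
      proof (rule always_eventually, rule allI)
        fix k
        have sp: "(s k)\<^sup>2 > 0" using sk[of k] by simp
        have "(s k)\<^sup>2 *\<^sub>R E k = Ups (pr (x k)) - ?y - s k *\<^sub>R ?A d - ((s k)\<^sup>2/2) *\<^sub>R (?A (w' k) + ?b)"
          using sp by (simp add: E_def pw')
        then have eq: "Ups (pr (x k)) - (?y + s k *\<^sub>R ?A d + ((s k)\<^sup>2 / 2) *\<^sub>R u) = (s k)\<^sup>2 *\<^sub>R E k + ((s k)\<^sup>2/2) *\<^sub>R ?A (w' k - w)"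
          by (simp add: u_def blinfun.diff_right algebra_simps)
        have "infdist (?y + s k *\<^sub>R ?A d + ((s k)\<^sup>2 / 2) *\<^sub>R u) S \<le> dist (?y + s k *\<^sub>R ?A d + ((s k)\<^sup>2 / 2) *\<^sub>R u) (Ups (pr (x k)))"
          using prP by (intro infdist_le) auto
        also have "\<dots> = norm ((s k)\<^sup>2 *\<^sub>R E k + ((s k)\<^sup>2/2) *\<^sub>R ?A (w' k - w))"
          by (simp add: dist_norm norm_minus_commute eq)
        also have "\<dots> \<le> norm ((s k)\<^sup>2 *\<^sub>R E k) + norm (((s k)\<^sup>2/2) *\<^sub>R ?A (w' k - w))" by (rule norm_triangle_ineq)
        also have "\<dots> = (s k)\<^sup>2 * (norm (E k) + norm (?A (w' k - w)) / 2)" using sp by (simp add: algebra_simps)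
        finally show "norm (infdist (?y + s k *\<^sub>R ?A d + ((s k)\<^sup>2 / 2) *\<^sub>R u) S / (s k)\<^sup>2)
           \<le> norm (E k) + norm (?A (w' k - w)) / 2"
          using sp by (simp add: infdist_nonneg divide_simps) (metis mult.commute)
      qed
      have "(\<lambda>k. norm (E k) + norm (?A (w' k - w)) / 2) \<longlonglongrightarrow> norm (0::'b) + norm (?A 0) / 2"
        by (intro tendsto_intros E0 ww) auto
      then show "(\<lambda>k. norm (E k) + norm (?A (w' k - w)) / 2) \<longlonglongrightarrow> 0" by simp
    qed
  qed
  then have uin: "u \<in> inner_so_tangent S ?y (?A d)" using eqS by simp
  then have g: "((\<lambda>t::real. infdist (?y + t *\<^sub>R ?A d + (t\<^sup>2 / 2) *\<^sub>R u) S / t\<^sup>2) \<longlongrightarrow> 0) (at_right 0)"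
    by (simp add: inner_so_tangent_def)
  show "w \<in> inner_so_tangent (Ups -` S) xbar d"
    unfolding inner_so_tangent_def mem_Collect_eq tendsto_at_iff_sequentially
  proof (intro allI impI)
    fix \<tau> :: "nat \<Rightarrow> real" assume \<tau>in: "\<forall>i. \<tau> i \<in> {0<..} - {0}" and \<tau>0: "\<tau> \<longlonglongrightarrow> 0"
    have \<tau>pos: "\<forall>k. \<tau> k > 0" using \<tau>in by simp
    have \<tau>k: "\<tau> k \<noteq> 0" for k using \<tau>pos by (metis less_irrefl)
    have g\<tau>: "((\<lambda>t::real. infdist (?y + t *\<^sub>R ?A d + (t\<^sup>2 / 2) *\<^sub>R u) S / t\<^sup>2) \<circ> \<tau>) \<longlonglongrightarrow> 0"
      using g \<tau>in \<tau>0 unfolding tendsto_at_iff_sequentially by blast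
    define F where "F = (\<lambda>k. (Ups (xbar + \<tau> k *\<^sub>R d + ((\<tau> k)\<^sup>2/2) *\<^sub>R w) - Ups xbar - \<tau> k *\<^sub>R ?A d
       - ((\<tau> k)\<^sup>2/2) *\<^sub>R (?A w + ?b)) /\<^sub>R (\<tau> k)\<^sup>2)"
    have F0: "F \<longlonglongrightarrow> 0" unfolding F_def
    proof (rule taylor_seq[OF dU dD \<tau>pos \<tau>0])
      show "(\<lambda>k. \<tau> k *\<^sub>R w) \<longlonglongrightarrow> 0" using tendsto_scaleR[OF \<tau>0 tendsto_const[of w]] by simp
    qed
    define xx where "xx = (\<lambda>k. xbar + \<tau> k *\<^sub>R d + ((\<tau> k)\<^sup>2/2) *\<^sub>R w)"
    have ev: "eventually (\<lambda>k. infdist (xx k) (Ups -` S) \<le> \<kappa> * infdist (Ups (xx k)) S) sequentially"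
    proof -
      have "(\<lambda>k. (\<tau> k *\<^sub>R d + ((\<tau> k)\<^sup>2/2) *\<^sub>R w) /\<^sub>R \<tau> k) \<longlonglongrightarrow> d"
      proof -
        have "(\<lambda>k. d + (1/2) *\<^sub>R (\<tau> k *\<^sub>R w)) \<longlonglongrightarrow> d + (1/2) *\<^sub>R (0 *\<^sub>R w)"
          by (intro tendsto_intros \<tau>0)
        moreover have "(\<tau> k *\<^sub>R d + ((\<tau> k)\<^sup>2/2) *\<^sub>R w) /\<^sub>R \<tau> k = d + (1/2) *\<^sub>R (\<tau> k *\<^sub>R w)" for k
          using \<tau>k[of k] by (simp add: power2_eq_square scaleR_add_right)
        ultimately show ?thesis by simp
      qed
      from sub_seq[OF \<tau>pos \<tau>0 this] show ?thesis by (simp add: xx_def add.assoc)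
    qed
    show "((\<lambda>t. infdist (xbar + t *\<^sub>R d + (t\<^sup>2 / 2) *\<^sub>R w) (Ups -` S) / t\<^sup>2) \<circ> \<tau>) \<longlonglongrightarrow> 0"
    proof (rule Lim_null_comparison)
      show "eventually (\<lambda>k. norm (((\<lambda>t. infdist (xbar + t *\<^sub>R d + (t\<^sup>2 / 2) *\<^sub>R w) (Ups -` S) / t\<^sup>2) \<circ> \<tau>) k)
          \<le> \<kappa> * ((infdist (?y + \<tau> k *\<^sub>R ?A d + ((\<tau> k)\<^sup>2 / 2) *\<^sub>R u) S / (\<tau> k)\<^sup>2) + norm (F k))) sequentially"
        using ev
      proof eventually_elim
        case (elim k)
        have sp: "(\<tau> k)\<^sup>2 > 0" using \<tau>k[of k] by simp
        have "(\<tau> k)\<^sup>2 *\<^sub>R F k = Ups (xx k) - ?y - \<tau> k *\<^sub>R ?A d - ((\<tau> k)\<^sup>2/2) *\<^sub>R (?A w + ?b)"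
          using sp by (simp add: F_def xx_def)
        then have eq: "Ups (xx k) - (?y + \<tau> k *\<^sub>R ?A d + ((\<tau> k)\<^sup>2 / 2) *\<^sub>R u) = (\<tau> k)\<^sup>2 *\<^sub>R F k"
          by (simp add: u_def algebra_simps)
        have "infdist (Ups (xx k)) S \<le> infdist (?y + \<tau> k *\<^sub>R ?A d + ((\<tau> k)\<^sup>2 / 2) *\<^sub>R u) S + dist (Ups (xx k)) (?y + \<tau> k *\<^sub>R ?A d + ((\<tau> k)\<^sup>2 / 2) *\<^sub>R u)"
          by (rule infdist_triangle)
        also have "dist (Ups (xx k)) (?y + \<tau> k *\<^sub>R ?A d + ((\<tau> k)\<^sup>2 / 2) *\<^sub>R u) = (\<tau> k)\<^sup>2 * norm (F k)"
          using sp by (simp add: dist_norm eq)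
        finally have a: "infdist (Ups (xx k)) S / (\<tau> k)\<^sup>2 \<le> infdist (?y + \<tau> k *\<^sub>R ?A d + ((\<tau> k)\<^sup>2 / 2) *\<^sub>R u) S / (\<tau> k)\<^sup>2 + norm (F k)"
          using sp by (simp add: divide_simps) (metis mult.commute)
        have "infdist (xx k) (Ups -` S) / (\<tau> k)\<^sup>2 \<le> \<kappa> * (infdist (Ups (xx k)) S / (\<tau> k)\<^sup>2)"
          using elim sp by (simp add: divide_right_mono)
        also have "\<dots> \<le> \<kappa> * (infdist (?y + \<tau> k *\<^sub>R ?A d + ((\<tau> k)\<^sup>2 / 2) *\<^sub>R u) S / (\<tau> k)\<^sup>2 + norm (F k))"
          using a kpos by (intro mult_left_mono) auto
        finally show ?case by (simp add: xx_def infdist_nonneg)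
      qed
      have "(\<lambda>k. \<kappa> * ((infdist (?y + \<tau> k *\<^sub>R ?A d + ((\<tau> k)\<^sup>2 / 2) *\<^sub>R u) S / (\<tau> k)\<^sup>2) + norm (F k))) \<longlonglongrightarrow> \<kappa> * (0 + norm (0::'b))"
        using g\<tau> F0 unfolding o_def by (intro tendsto_intros) auto
      then show "(\<lambda>k. \<kappa> * ((infdist (?y + \<tau> k *\<^sub>R ?A d + ((\<tau> k)\<^sup>2 / 2) *\<^sub>R u) S / (\<tau> k)\<^sup>2) + norm (F k))) \<longlonglongrightarrow> 0"
        by simp
    qed
  qed
qed

end


theorem proposition2p1:
  fixes Ups :: "'a::euclidean_space \<Rightarrow> 'b::euclidean_space"
    and D :: "'a \<Rightarrow> ('a \<Rightarrow>\<^sub>L 'b)"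
    and S :: "'b set" and xbar d :: 'a
  assumes "closed S"
    and "\<And>x. (Ups has_derivative blinfun_apply (D x)) (at x)"
    and "\<And>x. D differentiable (at x)"
    and "xbar \<in> Ups -` S"
    and "dir_metric_subregular Ups S xbar d"
    and "blinfun_apply (D xbar) d \<in> tangent_cone S (Ups xbar)"
  shows "(outer_so_regular S (Ups xbar) (blinfun_apply (D xbar) d)
            \<longrightarrow> outer_so_regular (Ups -` S) xbar d)
       \<and> (so_regular S (Ups xbar) (blinfun_apply (D xbar) d)
            \<longrightarrow> so_regular (Ups -` S) xbar d)"
proof -
  obtain D2 where dD: "(D has_derivative D2) (at xbar)"
    using assms(3)[of xbar] unfolding differentiable_def by blast
  obtain \<kappa> \<rho> \<delta> where k: "\<kappa> > 0" "\<rho> > 0" "\<delta> > 0"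
    and sub: "\<forall>w\<in>dir_nbhd d \<rho> \<delta>. infdist (xbar + w) (Ups -` S) \<le> \<kappa> * infdist (Ups (xbar + w)) S"
    using assms(5) unfolding dir_metric_subregular_def by blast
  interpret psetting Ups D D2 S xbar d \<kappa> \<rho> \<delta>
    using assms(1,2,4) dD k sub by unfold_locales auto
  show ?thesis
  proof (intro conjI impI)
    assume "outer_so_regular S (Ups xbar) (blinfun_apply (D xbar) d)"
    then show "outer_so_regular (Ups -` S) xbar d" by (rule outer_reg)
  next
    assume so: "so_regular S (Ups xbar) (blinfun_apply (D xbar) d)"
    then have "outer_so_regular (Ups -` S) xbar d" by (intro outer_reg) (simp add: so_regular_def)
    moreover have "outer_so_tangent (Ups -` S) xbar d = inner_so_tangent (Ups -` S) xbar d"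
      using so inner_sub_outer outer_sub_inner by (auto simp: so_regular_def)
    ultimately show "so_regular (Ups -` S) xbar d" by (simp add: so_regular_def)
  qed
qed

end
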